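(* For $k\ge1$ let $\mu_{2k+5}$ be the permutation of $[2k+5]$ given as the sequence $$\mu_{2k+5}=2k+2,\ 2k+5,\ 2k+4,\ \underbrace{2k,\ 2k+3,\ 2k-2,\ 2k+1,\ \dots,\ 6,\ 9,\ 4,\ 7}_{\text{pairs }(2j,\,2j+3)\text{ for } j=k,k-1,\dots,2},\ 1,\ 5,\ 3,\ 2,$$ so that $\mu_7=4,7,6,1,5,3,2$, $\mu_9=6,9,8,4,7,1,5,3,2$, $\mu_{11}=8,11,10,6,9,4,7,1,5,3,2$. Let $U=\{\mu_7,\mu_9,\mu_{11},\dots\}$. Then $U$ is an antichain with respect to $\prec$. Moreover, $\{123,3214,2143,15432\}\cup U$ is an antichain with respect to $\prec$.
   Context: $\pi\prec\rho$ means $\rho$ (as a sequence) has a subsequence order-isomorphic to $\pi$ (same relative order of entries). Permutations like $3214$ are written in one-line notation. An antichain is a set of pairwise $\prec$-incomparable permutations. *)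

theory Defs
  imports Main "HOL-Library.Sublist"
begin

text \<open>Permutations are represented in one-line notation as lists of naturals.\<close>

definition order_iso :: "nat list \<Rightarrow> nat list \<Rightarrow> bool" where
  "order_iso xs ys \<longleftrightarrow> length xs = length ys \<and>
     (\<forall>i<length xs. \<forall>j<length xs. xs ! i < xs ! j \<longleftrightarrow> ys ! i < ys ! j)"

definition contains :: "nat list \<Rightarrow> nat list \<Rightarrow> bool" (infix "\<prec>" 50) where
  "p \<prec> r \<longleftrightarrow> (\<exists>s. subseq s r \<and> order_iso p s)"

definition antichain :: "nat list set \<Rightarrow> bool" where
  "antichain A \<longleftrightarrow> (\<forall>x\<in>A. \<forall>y\<in>A. x \<noteq> y \<longrightarrow> \<not> x \<prec> y)"

text \<open>mu k is the permutation mu_{2k+5} of the paper (k \<ge> 1).\<close>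
definition mu :: "nat \<Rightarrow> nat list" where
  "mu k = [2*k+2, 2*k+5, 2*k+4]
          @ concat (map (\<lambda>j. [2*j, 2*j+3]) (rev [2..<k+1]))
          @ [1, 5, 3, 2]"

lemma "mu 1 = [4,7,6,1,5,3,2]" "mu 2 = [6,9,8,4,7,1,5,3,2]"
      "mu 3 = [8,11,10,6,9,4,7,1,5,3,2]"
  by (simp_all add: mu_def upt_rec)

end

theory Submission
  imports Defs
begin


definition F :: "nat \<Rightarrow> nat \<Rightarrow> nat" where
 "F l p = (if p = 0 then 2*l+2 else if p = 1 then 2*l+5 else if p = 2 then 2*l+4
   else if p = 2*l+1 then 1 else if p = 2*l+3 then 3 else if p = 2*l+4 then 2
   else if odd p then 2*l+3-p else 2*l+7-p)"

lemma cc_len: "length (concat (map (\<lambda>j. [a j, b j :: nat]) xs)) = 2 * length xs"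
  by (induction xs) auto

lemma cc_nth: "t < length xs \<Longrightarrow> concat (map (\<lambda>j. [a j, b j :: nat]) xs) ! (2*t) = a (xs!t)
   \<and> concat (map (\<lambda>j. [a j, b j]) xs) ! (2*t+1) = b (xs!t)"
proof (induction xs arbitrary: t)
  case Nil then show ?case by simp
next
  case (Cons x xs) then show ?case by (cases t) auto
qed

lemma mu_len: "1 \<le> l \<Longrightarrow> length (mu l) = 2*l+5"
  apply (simp add: mu_def cc_len) by arith

lemma mu_nth: assumes "1 \<le> l" "p < 2*l+5" shows "mu l ! p = F l p"
proof -
  define C where "C = concat (map (\<lambda>j. [2*j, 2*j+3 :: nat]) (rev [2..<l+1]))"
  have lc: "length C = 2*l - 2" unfolding C_def apply (simp add: cc_len) by arith
  have mu: "mu l = [2*l+2, 2*l+5, 2*l+4] @ C @ [1,5,3,2]" by (simp add: mu_def C_def)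
  consider "p < 3" | "3 \<le> p" "p < 2*l+1" | "2*l+1 \<le> p" by linarith
  then show ?thesis
  proof cases
    case 1 then have "p = 0 \<or> p = 1 \<or> p = 2" by linarith
    moreover have "F l 0 = 2*l+2" "F l 1 = 2*l+5" "F l 2 = 2*l+4" using assms by (auto simp: F_def)
    ultimately show ?thesis by (auto simp: mu)
  next
    case 2
    obtain t where t: "p - 3 = 2*t \<or> p - 3 = 2*t+1" by (metis odd_two_times_div_two_succ dvd_mult_div_cancel)
    have tl: "t < l - 1" using t 2 by auto
    have r: "rev [2..<l+1] ! t = l - t" using tl by (simp add: rev_nth del: upt_Suc)
    have ct: "C ! (2*t) = 2*(l-t)" "C ! (2*t+1) = 2*(l-t)+3"
      using cc_nth[of t "rev [2..<l+1]" "\<lambda>j. 2*j" "\<lambda>j. 2*j+3"] tl r unfolding C_def by auto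
    have "p - 3 < length C" using 2 lc by linarith
    then have "mu l ! p = C ! (p - 3)" using 2 by (simp add: mu nth_append numeral_3_eq_3)
    moreover have "p = 2*t+3 \<or> p = 2*t+4" using t 2 by auto
    moreover have "F l (2*t+3) = 2*(l-t)" using tl unfolding F_def by auto
    moreover have "F l (2*t+4) = 2*(l-t)+3" using tl unfolding F_def by auto
    ultimately show ?thesis using ct by auto
  next
    case 3
    then have "p = 2*l+1 \<or> p = 2*l+2 \<or> p = 2*l+3 \<or> p = 2*l+4" using assms by linarith
    moreover have "F l (2*l+1) = 1" "F l (2*l+2) = 5" "F l (2*l+3) = 3" "F l (2*l+4) = 2"
      using assms by (auto simp: F_def)
    moreover have "mu l ! (2*l+1) = 1" "mu l ! (2*l+2) = 5" "mu l ! (2*l+3) = 3" "mu l ! (2*l+4) = 2"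
      using lc assms by (auto simp: mu nth_append)
    ultimately show ?thesis by auto
  qed
qed

lemma F_disj: assumes "1 \<le> l" "p < 2*l+5"
  shows "(p=0 \<and> F l p = 2*l+2) \<or> (p=1 \<and> F l p = 2*l+5) \<or> (p=2 \<and> F l p = 2*l+4) \<or>
    (\<exists>a. p = 2*a+3 \<and> a+2 \<le> l \<and> F l p = 2*l-2*a) \<or>
    (\<exists>a. p = 2*a+4 \<and> a+1 \<le> l \<and> F l p = 2*l+3-2*a) \<or>
    (p = 2*l+1 \<and> F l p = 1) \<or> (p = 2*l+3 \<and> F l p = 3) \<or> (p = 2*l+4 \<and> F l p = 2)"
proof -
  consider "p \<le> 2" | "3 \<le> p" "p \<le> 2*l+2" "p \<noteq> 2*l+1" | "p = 2*l+1" | "p = 2*l+3" | "p = 2*l+4"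
    using assms by linarith
  then show ?thesis
  proof cases
    case 1 then have "p = 0 \<or> p = 1 \<or> p = 2" by linarith
    then show ?thesis using assms by (auto simp: F_def)
  next
    case 2
    obtain t where t: "p - 3 = 2*t \<or> p - 3 = 2*t+1" by (metis odd_two_times_div_two_succ dvd_mult_div_cancel)
    then have "p = 2*t+3 \<or> p = 2*(t)+4" using 2 by auto
    then show ?thesis
    proof
      assume p: "p = 2*t+3"
      then have "t+2 \<le> l" using 2 by presburger
      moreover have "F l p = 2*l - 2*t" using p 2 by (auto simp: F_def)
      ultimately show ?thesis using p by blast
    next
      assume p: "p = 2*t+4"
      then have "t+1 \<le> l" using 2 by auto
      moreover have "F l p = 2*l+3 - 2*t" using p 2 by (auto simp: F_def)
      ultimately show ?thesis using p by blast
    qed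
  qed (auto simp: F_def)
qed

definition FW :: "nat \<Rightarrow> nat \<Rightarrow> nat \<Rightarrow> bool" where
  "FW l p q \<longleftrightarrow> p < q \<and> q < 2*l+5 \<and> ((p = 0 \<and> (q=1 \<or> q=2 \<or> q=4)) \<or> (\<exists>a. p = 2*a+3 \<and> a+2 \<le> l \<and> (q = p+1 \<or> q = p+3))
     \<or> (p = 2*l+1 \<and> 2*l+2 \<le> q))"

lemma fwd: assumes "1 \<le> l" "p < q" "q < 2*l+5" "F l p < F l q"
  shows "FW l p q"
proof -
  have hp: "p < 2*l+5" using assms by linarith
  obtain x y where x: "x = F l p" and y: "y = F l q" by blast
  have Q: "(q=0 \<and> y = 2*l+2) \<or> (q=1 \<and> y = 2*l+5) \<or> (q=2 \<and> y = 2*l+4) \<or>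
    (\<exists>a. q = 2*a+3 \<and> a+2 \<le> l \<and> y = 2*l-2*a) \<or>
    (\<exists>a. q = 2*a+4 \<and> a+1 \<le> l \<and> y = 2*l+3-2*a) \<or>
    (q = 2*l+1 \<and> y = 1) \<or> (q = 2*l+3 \<and> y = 3) \<or> (q = 2*l+4 \<and> y = 2)"
    using F_disj[OF assms(1) assms(3)] unfolding y .
  have P: "(p=0 \<and> x = 2*l+2) \<or> (p=1 \<and> x = 2*l+5) \<or> (p=2 \<and> x = 2*l+4) \<or>
    (\<exists>a. p = 2*a+3 \<and> a+2 \<le> l \<and> x = 2*l-2*a) \<or>
    (\<exists>a. p = 2*a+4 \<and> a+1 \<le> l \<and> x = 2*l+3-2*a) \<or>
    (p = 2*l+1 \<and> x = 1) \<or> (p = 2*l+3 \<and> x = 3) \<or> (p = 2*l+4 \<and> x = 2)"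
    using F_disj[OF assms(1) hp] unfolding x .
  have xy: "x < y" "p < q" "q < 2*l+5" "1 \<le> l" using assms x y by auto
  from P show ?thesis
  proof (elim disjE exE conjE)
    assume "p = 0" "x = 2*l+2"
    then have "q=1 \<or> q=2 \<or> q=4" using Q xy by (elim disjE exE conjE; (simp; fail)?; simp; linarith)
    then show ?thesis using \<open>p = 0\<close> xy unfolding FW_def by blast
  next
    fix a assume h: "p = 2*a+3" "a+2 \<le> l" "x = 2*l-2*a"
    then have "q = p+1 \<or> q = p+3" using Q xy by (elim disjE exE conjE; (simp; fail)?; simp; linarith)
    then show ?thesis using h xy unfolding FW_def by blast
  next
    assume "p = 2*l+1" then show ?thesis using xy by (simp add: FW_def)
  qed (use Q xy in \<open>elim disjE exE conjE; simp\<close>)+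
qed



lemma subseq_idx: "subseq s r \<Longrightarrow> \<exists>g. (\<forall>i<length s. g i < length r \<and> s!i = r!(g i)) \<and>
   (\<forall>i j. i < j \<longrightarrow> j < length s \<longrightarrow> g i < g j)"
proof (induction rule: list_emb.induct)
  case (list_emb_Nil ys) then show ?case by simp
next
  case (list_emb_Cons xs ys y)
  then obtain g where g: "\<forall>i<length xs. g i < length ys \<and> xs!i = ys!(g i)"
    "\<forall>i j. i < j \<longrightarrow> j < length xs \<longrightarrow> g i < g j" by blast
  show ?case by (rule exI[of _ "\<lambda>i. Suc (g i)"]) (use g in auto)
next
  case (list_emb_Cons2 x y xs ys)
  then obtain g where g: "\<forall>i<length xs. g i < length ys \<and> xs!i = ys!(g i)"
    "\<forall>i j. i < j \<longrightarrow> j < length xs \<longrightarrow> g i < g j" by blast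
  let ?h = "\<lambda>i. case i of 0 \<Rightarrow> 0 | Suc i \<Rightarrow> Suc (g i)"
  have "\<forall>i<length (x#xs). ?h i < length (y#ys) \<and> (x#xs)!i = (y#ys)!(?h i)"
    using g list_emb_Cons2.hyps(1) by (auto simp: nth_Cons split: nat.splits)
  moreover have "\<forall>i j. i < j \<longrightarrow> j < length (x#xs) \<longrightarrow> ?h i < ?h j"
    using g by (auto split: nat.splits)
  ultimately show ?case by blast
qed

lemma contains_len: "p \<prec> r \<Longrightarrow> length p \<le> length r"
  unfolding contains_def order_iso_def using list_emb_length by fastforce

lemma contains_mu: assumes "p \<prec> mu l" "1 \<le> l"
  obtains g where "length p \<le> 2*l+5"
    "\<And>i j. i < j \<Longrightarrow> j < length p \<Longrightarrow> p!i < p!j \<Longrightarrow> FW l (g i) (g j)"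
    "\<And>i j. i < j \<Longrightarrow> j < length p \<Longrightarrow> g i < g j"
proof -
  obtain s where s: "subseq s (mu l)" "order_iso p s" using assms unfolding contains_def by blast
  obtain g where g: "\<forall>i<length s. g i < length (mu l) \<and> s!i = (mu l)!(g i)"
    "\<forall>i j. i < j \<longrightarrow> j < length s \<longrightarrow> g i < g j" using subseq_idx[OF s(1)] by blast
  have ls: "length s = length p" using s(2) unfolding order_iso_def by simp
  have lm: "length (mu l) = 2*l+5" using mu_len[OF assms(2)] .
  show ?thesis
  proof
    show "length p \<le> 2*l+5" using contains_len[OF assms(1)] lm by simp
  next
    fix i j assume ij: "i < j" "j < length p"
    then show "g i < g j" using g ls by auto
  next
    fix i j assume ij: "i < j" "j < length p" "p!i < p!j"
    have gi: "g i < 2*l+5" "g j < 2*l+5" "g i < g j" using g ls ij lm by auto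
    have "s!i < s!j" using s(2) ij unfolding order_iso_def by auto
    then have "F l (g i) < F l (g j)" using g ls ij lm mu_nth[OF assms(2)] gi by auto
    then show "FW l (g i) (g j)" using fwd[OF assms(2) gi(3) gi(2)] by blast
  qed
qed

lemma FW_src: "FW l a x \<Longrightarrow> a = 0 \<or> (\<exists>t. a = 2*t+3 \<and> t+2 \<le> l) \<or> a = 2*l+1"
  unfolding FW_def by blast

lemma FW_0: "1 \<le> l \<Longrightarrow> FW l 0 x \<Longrightarrow> 1 \<le> x \<and> x \<le> 4 \<and> x \<noteq> 3"
  unfolding FW_def by auto

lemma FW_o: "t+2 \<le> l \<Longrightarrow> FW l (2*t+3) x \<Longrightarrow> 2*t+4 \<le> x \<and> x \<le> 2*t+6 \<and> x \<noteq> 2*t+5"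
  unfolding FW_def by auto

lemma FW_L: "FW l (2*l+1) x \<Longrightarrow> 2*l+2 \<le> x \<and> x \<le> 2*l+4"
  unfolding FW_def by auto

lemma FW_lt: "FW l a x \<Longrightarrow> a < x \<and> x < 2*l+5"
  unfolding FW_def by blast

lemma no123: assumes "1 \<le> l" "FW l a b" "FW l b c" shows False
proof -
  have ab: "a < b" using FW_lt[OF assms(2)] by simp
  have bo: "(\<exists>t. b = 2*t+3 \<and> t+2 \<le> l) \<or> b = 2*l+1" using FW_src[OF assms(3)] ab by auto
  from FW_src[OF assms(2)] consider (z) "a = 0" | (o) t where "a = 2*t+3" "t+2 \<le> l" | (L) "a = 2*l+1" by blast
  then show False
  proof cases
    case z
    have "b \<le> 4 \<and> b \<noteq> 3" using FW_0[OF assms(1)] assms(2) z by simp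
    then show False using bo assms(1) by presburger
  next
    case o
    have "2*t+4 \<le> b \<and> b \<le> 2*t+6 \<and> b \<noteq> 2*t+5" using FW_o[OF o(2)] assms(2) o(1) by simp
    then show False using bo by presburger
  next
    case L
    then show False using bo ab by linarith
  qed
qed

lemma no3214: assumes "1 \<le> l" "a < b" "b < c" "FW l a d" "FW l b d" "FW l c d" shows False
proof -
  have bo: "(\<exists>t. b = 2*t+3 \<and> t+2 \<le> l) \<or> b = 2*l+1" using FW_src[OF assms(5)] assms(2) by auto
  have co: "(\<exists>t. c = 2*t+3 \<and> t+2 \<le> l) \<or> c = 2*l+1" using FW_src[OF assms(6)] assms(2,3) by auto
  have bc: "\<exists>t. b = 2*t+3 \<and> t+2 \<le> l" using bo co assms(3) by auto
  then obtain s where s: "b = 2*s+3" "s+2 \<le> l" by blast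
  have db: "2*s+4 \<le> d \<and> d \<le> 2*s+6" using FW_o[OF s(2)] assms(5) s(1) by simp
  have dc: "c+1 \<le> d" using FW_lt[OF assms(6)] by simp
  from FW_src[OF assms(4)] consider (z) "a = 0" | (o) t where "a = 2*t+3" "t+2 \<le> l" | (L) "a = 2*l+1" by blast
  then show False
  proof cases
    case z
    have "d \<le> 4" using FW_0[OF assms(1)] assms(4) z by simp
    then show False using db dc s assms(3) by linarith
  next
    case o
    have "d \<le> 2*t+6" using FW_o[OF o(2)] assms(4) o(1) by simp
    moreover have "t < s" using assms(2) o(1) s(1) by linarith
    ultimately show False using db dc s assms(3) by linarith
  next
    case L
    then show False using assms(2,3) co by auto
  qed
qed

lemma no2143: assumes "1 \<le> l" "a < b" "c < d" "FW l a c" "FW l a d" "FW l b c" "FW l b d" shows False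
proof -
  from FW_src[OF assms(6)] consider (z) "b = 0" | (o) t where "b = 2*t+3" "t+2 \<le> l" | (L) "b = 2*l+1" by blast
  then show False
  proof cases
    case z then show False using assms(2) by simp
  next
    case o
    have c: "2*t+4 \<le> c" using FW_o[OF o(2)] assms(6) o(1) by simp
    from FW_src[OF assms(4)] consider (z2) "a = 0" | (o2) s where "a = 2*s+3" "s+2 \<le> l" | (L2) "a = 2*l+1" by blast
    then show False
    proof cases
      case z2
      have "d \<le> 4" using FW_0[OF assms(1)] assms(5) z2 by simp
      then show False using c assms(3) by linarith
    next
      case o2
      have "d \<le> 2*s+6" using FW_o[OF o2(2)] assms(5) o2(1) by simp
      moreover have "s < t" using assms(2) o(1) o2(1) by linarith
      ultimately show False using c assms(3) by linarith
    next
      case L2 then show False using assms(2) o by linarith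
    qed
  next
    case L
    have c: "2*l+2 \<le> c" using FW_L assms(6) L by blast
    from FW_src[OF assms(4)] consider (z2) "a = 0" | (o2) s where "a = 2*s+3" "s+2 \<le> l" | (L2) "a = 2*l+1" by blast
    then show False
    proof cases
      case z2
      have "d \<le> 4" using FW_0[OF assms(1)] assms(5) z2 by simp
      then show False using c assms(1,3) by linarith
    next
      case o2
      have "d \<le> 2*s+6" using FW_o[OF o2(2)] assms(5) o2(1) by simp
      then show False using c assms(3) o2(2) by linarith
    next
      case L2 then show False using assms(2) L by linarith
    qed
  qed
qed

lemma no15432: assumes "1 \<le> l" "b < c" "c < d" "d < e" "FW l a b" "FW l a c" "FW l a d" "FW l a e" shows False
proof -
  from FW_src[OF assms(5)] consider (z) "a = 0" | (o) t where "a = 2*t+3" "t+2 \<le> l" | (L) "a = 2*l+1" by blast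
  then show False
  proof cases
    case z
    have h: "1 \<le> b" "d \<noteq> 3" "e \<le> 4"
      using FW_0[OF assms(1)] assms(5,7,8) z by simp_all
    have "3 \<le> d" using h(1) assms(2,3) by linarith
    then have "3 < d" using h(2) by (simp add: le_neq_implies_less)
    then show False using h(3) assms(4) by linarith
  next
    case o
    have "2*t+4 \<le> b" "e \<le> 2*t+6"
      using FW_o[OF o(2)] assms(5,8) o(1) by simp_all
    then show False using assms(2,3,4) by linarith
  next
    case L
    have "2*l+2 \<le> b" "e \<le> 2*l+4" using FW_L assms(5,8) L by simp_all
    then show False using assms(2,3,4) by linarith
  qed
qed

definition cc :: "nat \<Rightarrow> nat \<Rightarrow> int" where
  "cc l p = (if p = 0 then 0 else if p \<le> 2 then -1 else if 2*l+3 \<le> p then 2*int l+1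
     else if odd p then int p - 1 else int p - 3)"

lemma cdist: assumes "1 \<le> l" "FW l p q" shows "\<bar>cc l p - cc l q\<bar> \<le> 1"
proof -
  have pq: "p < q" "q < 2*l+5" using FW_lt[OF assms(2)] by auto
  from FW_src[OF assms(2)] consider (z) "p = 0" | (o) t where "p = 2*t+3" "t+2 \<le> l" | (L) "p = 2*l+1" by blast
  then show ?thesis
  proof cases
    case z
    then have "q = 1 \<or> q = 2 \<or> q = 4" using assms(2) unfolding FW_def by auto
    then show ?thesis using z assms(1) by (auto simp: cc_def)
  next
    case o
    then have "q = 2*t+4 \<or> q = 2*t+6" using assms(2) unfolding FW_def by auto
    then show ?thesis using o by (auto simp: cc_def)
  next
    case L
    then have "q = 2*l+2 \<or> q = 2*l+3 \<or> q = 2*l+4" using pq by auto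
    then show ?thesis using L assms(1) by (auto simp: cc_def)
  qed
qed

lemma three_tgt: assumes "1 \<le> l" "x < y" "y < z" "FW l a x" "FW l a y" "FW l a z"
  shows "a = 0 \<or> a = 2*l+1"
proof -
  from FW_src[OF assms(4)] consider (z) "a = 0" | (o) t where "a = 2*t+3" "t+2 \<le> l" | (L) "a = 2*l+1" by blast
  then show ?thesis
  proof cases
    case o
    have "2*t+4 \<le> x" "z \<le> 2*t+6" "y \<noteq> 2*t+5" using FW_o[OF o(2)] assms(4,5,6) o(1) by simp_all
    then show ?thesis using assms(2,3) by presburger
  qed auto
qed

lemma F_odd: "t+2 \<le> k \<Longrightarrow> F k (2*t+3) = 2*k-2*t"
  unfolding F_def by auto
lemma F_even: "t+1 \<le> k \<Longrightarrow> F k (2*t+4) = 2*k+3-2*t"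
  unfolding F_def by (auto; presburger)
lemma F_vals: "1 \<le> k \<Longrightarrow> F k 0 = 2*k+2 \<and> F k 1 = 2*k+5 \<and> F k 2 = 2*k+4 \<and> F k 4 = 2*k+3 \<and>
   F k (2*k+1) = 1 \<and> F k (2*k+2) = 5 \<and> F k (2*k+3) = 3 \<and> F k (2*k+4) = 2"
  unfolding F_def by (auto; presburger)

lemma mu_not: assumes "1 \<le> k" "k < l" shows "\<not> mu k \<prec> mu l"
proof
  assume h: "mu k \<prec> mu l"
  have l1: "1 \<le> l" using assms by simp
  obtain g where g: "\<And>i j. i < j \<Longrightarrow> j < length (mu k) \<Longrightarrow> (mu k)!i < (mu k)!j \<Longrightarrow> FW l (g i) (g j)"
    "\<And>i j. i < j \<Longrightarrow> j < length (mu k) \<Longrightarrow> g i < g j"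
    using contains_mu[OF h l1] by metis
  have E: "FW l (g i) (g j)" if "i < j" "j < 2*k+5" "F k i < F k j" for i j
    using g(1)[of i j] that mu_len[OF assms(1)] mu_nth[OF assms(1)] by simp
  have M: "g i < g j" if "i < j" "j < 2*k+5" for i j
    using g(2)[of i j] that mu_len[OF assms(1)] by simp
  have FV: "F k 0 = 2*k+2 \<and> F k 1 = 2*k+5 \<and> F k 2 = 2*k+4 \<and> F k 4 = 2*k+3 \<and>
   F k (2*k+1) = 1 \<and> F k (2*k+2) = 5 \<and> F k (2*k+3) = 3 \<and> F k (2*k+4) = 2" using F_vals[OF assms(1)] .
  have g0: "g 0 = 0 \<or> g 0 = 2*l+1"
    by (rule three_tgt[OF l1 M[of 1 2] M[of 2 4] E[of 0 1] E[of 0 2] E[of 0 4]]) (use FV assms(1) in auto)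
  have g1: "g (2*k+1) = 0 \<or> g (2*k+1) = 2*l+1"
    by (rule three_tgt[OF l1 M[of "2*k+2" "2*k+3"] M[of "2*k+3" "2*k+4"] E[of "2*k+1" "2*k+2"] E[of "2*k+1" "2*k+3"] E[of "2*k+1" "2*k+4"]]) (use FV in auto)
  have "g 0 < g (2*k+1)" using M[of 0 "2*k+1"] by simp
  then have G: "g 0 = 0" "g (2*k+1) = 2*l+1" using g0 g1 by auto
  have D: "\<bar>cc l (g i) - cc l (g j)\<bar> \<le> 1" if "i < j" "j < 2*k+5" "F k i < F k j" for i j
    using cdist[OF l1 E[OF that]] .
  have P: "\<bar>cc l (g 0) - cc l (g (2*t+3))\<bar> \<le> 2*int t+2" if "t < k" for t
    using that
  proof (induction t)
    case 0
    have a: "\<bar>cc l (g 0) - cc l (g 4)\<bar> \<le> 1" using D[of 0 4] FV assms(1) by simp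
    have "F k 3 < F k 4"
    proof (cases "2 \<le> k")
      case True then show ?thesis using F_odd[of 0 k] FV by simp
    next
      case False then have "k = 1" using assms(1) by simp
      then show ?thesis using FV by simp
    qed
    then have b: "\<bar>cc l (g 3) - cc l (g 4)\<bar> \<le> 1" using D[of 3 4] assms(1) by simp
    show ?case using a b by simp
  next
    case (Suc t)
    then have IH: "\<bar>cc l (g 0) - cc l (g (2*t+3))\<bar> \<le> 2*int t+2" by simp
    have o1: "F k (2*t+3) = 2*k-2*t" using F_odd[of t k] Suc.prems by simp
    have e1: "F k (2*(t+1)+4) = 2*k+3-2*(t+1)" using F_even[of "t+1" k] Suc.prems by simp
    have a: "\<bar>cc l (g (2*t+3)) - cc l (g (2*(t+1)+4))\<bar> \<le> 1"
      using D[of "2*t+3" "2*(t+1)+4"] o1 e1 Suc.prems by simp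
    have "F k (2*(t+1)+3) < F k (2*(t+1)+4)"
    proof (cases "t+3 \<le> k")
      case True then show ?thesis using F_odd[of "t+1" k] e1 by simp
    next
      case False then have k: "k = t+2" using Suc.prems by simp
      have e: "2*(t+1)+3 = 2*k+1" "2*(t+1)+4 = 2*k+2" using k by simp_all
      show ?thesis unfolding e using FV by simp
    qed
    then have b: "\<bar>cc l (g (2*(t+1)+3)) - cc l (g (2*(t+1)+4))\<bar> \<le> 1"
      using D[of "2*(t+1)+3" "2*(t+1)+4"] Suc.prems by simp
    show ?case using IH a b by simp
  qed
  have e: "2*(k-1)+3 = 2*k+1" using assms(1) by simp
  have "\<bar>cc l (g 0) - cc l (g (2*k+1))\<bar> \<le> 2*int (k-1)+2" using P[of "k-1", unfolded e] assms(1) by simp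
  then have "\<bar>cc l 0 - cc l (2*l+1)\<bar> \<le> 2*int k" using G assms(1) by simp
  moreover have "cc l 0 = 0" "cc l (2*l+1) = 2*int l" using l1 by (auto simp: cc_def)
  ultimately show False using assms(2) by simp
qed


lemma av123: assumes "1 \<le> l" shows "\<not> [1,2,3] \<prec> mu l"
proof
  assume h: "[1,2,3] \<prec> mu l"
  obtain g where "length ([1,2,3::nat]) \<le> 2*l+5"
    and g1: "\<And>i j. i < j \<Longrightarrow> j < length ([1,2,3::nat]) \<Longrightarrow> ([1,2,3::nat])!i < ([1,2,3::nat])!j \<Longrightarrow> FW l (g i) (g j)"
    and g2: "\<And>i j. i < j \<Longrightarrow> j < length ([1,2,3::nat]) \<Longrightarrow> g i < g j"
    using contains_mu[OF h assms] by blast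
  show False using no123[OF assms g1[of 0 1] g1[of 1 2]] by simp
qed

lemma av3214: assumes "1 \<le> l" shows "\<not> [3,2,1,4] \<prec> mu l"
proof
  assume h: "[3,2,1,4] \<prec> mu l"
  obtain g where "length ([3,2,1,4::nat]) \<le> 2*l+5"
    and g1: "\<And>i j. i < j \<Longrightarrow> j < length ([3,2,1,4::nat]) \<Longrightarrow> ([3,2,1,4::nat])!i < ([3,2,1,4::nat])!j \<Longrightarrow> FW l (g i) (g j)"
    and g2: "\<And>i j. i < j \<Longrightarrow> j < length ([3,2,1,4::nat]) \<Longrightarrow> g i < g j"
    using contains_mu[OF h assms] by blast
  show False using no3214[OF assms g2[of 0 1] g2[of 1 2] g1[of 0 3] g1[of 1 3] g1[of 2 3]] by simp
qed

lemma av2143: assumes "1 \<le> l" shows "\<not> [2,1,4,3] \<prec> mu l"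
proof
  assume h: "[2,1,4,3] \<prec> mu l"
  obtain g where "length ([2,1,4,3::nat]) \<le> 2*l+5"
    and g1: "\<And>i j. i < j \<Longrightarrow> j < length ([2,1,4,3::nat]) \<Longrightarrow> ([2,1,4,3::nat])!i < ([2,1,4,3::nat])!j \<Longrightarrow> FW l (g i) (g j)"
    and g2: "\<And>i j. i < j \<Longrightarrow> j < length ([2,1,4,3::nat]) \<Longrightarrow> g i < g j"
    using contains_mu[OF h assms] by blast
  show False using no2143[OF assms g2[of 0 1] g2[of 2 3] g1[of 0 2] g1[of 0 3] g1[of 1 2] g1[of 1 3]] by simp
qed

lemma av15432: assumes "1 \<le> l" shows "\<not> [1,5,4,3,2] \<prec> mu l"
proof
  assume h: "[1,5,4,3,2] \<prec> mu l"
  obtain g where "length ([1,5,4,3,2::nat]) \<le> 2*l+5"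
    and g1: "\<And>i j. i < j \<Longrightarrow> j < length ([1,5,4,3,2::nat]) \<Longrightarrow> ([1,5,4,3,2::nat])!i < ([1,5,4,3,2::nat])!j \<Longrightarrow> FW l (g i) (g j)"
    and g2: "\<And>i j. i < j \<Longrightarrow> j < length ([1,5,4,3,2::nat]) \<Longrightarrow> g i < g j"
    using contains_mu[OF h assms] by blast
  show False using no15432[OF assms g2[of 1 2] g2[of 2 3] g2[of 3 4] g1[of 0 1] g1[of 0 2] g1[of 0 3] g1[of 0 4]] by simp
qed

lemma contains_code: "p \<prec> r \<longleftrightarrow> (\<exists>s\<in>set (subseqs r). order_iso p s)"
  unfolding contains_def using in_set_subseqs by blast

lemma order_iso_code: "order_iso xs ys \<longleftrightarrow> length xs = length ys \<and>
  list_all (\<lambda>i. list_all (\<lambda>j. (xs!i < xs!j) = (ys!i < ys!j)) [0..<length xs]) [0..<length xs]"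
  unfolding order_iso_def list_all_iff by auto

lemma pat1: "\<not> [1,2,3] \<prec> ([3,2,1,4] :: nat list)"
  unfolding contains_code order_iso_code by (simp add: upt_rec)

lemma pat2: "\<not> [1,2,3] \<prec> ([2,1,4,3] :: nat list)"
  unfolding contains_code order_iso_code by (simp add: upt_rec)

lemma pat3: "\<not> [1,2,3] \<prec> ([1,5,4,3,2] :: nat list)"
  unfolding contains_code order_iso_code by (simp add: upt_rec)

lemma pat4: "\<not> [3,2,1,4] \<prec> ([1,2,3] :: nat list)"
  unfolding contains_code order_iso_code by (simp add: upt_rec)

lemma pat5: "\<not> [3,2,1,4] \<prec> ([2,1,4,3] :: nat list)"
  unfolding contains_code order_iso_code by (simp add: upt_rec)

lemma pat6: "\<not> [3,2,1,4] \<prec> ([1,5,4,3,2] :: nat list)"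
  unfolding contains_code order_iso_code by (simp add: upt_rec)

lemma pat7: "\<not> [2,1,4,3] \<prec> ([1,2,3] :: nat list)"
  unfolding contains_code order_iso_code by (simp add: upt_rec)

lemma pat8: "\<not> [2,1,4,3] \<prec> ([3,2,1,4] :: nat list)"
  unfolding contains_code order_iso_code by (simp add: upt_rec)

lemma pat9: "\<not> [2,1,4,3] \<prec> ([1,5,4,3,2] :: nat list)"
  unfolding contains_code order_iso_code by (simp add: upt_rec)

lemma pat10: "\<not> [1,5,4,3,2] \<prec> ([1,2,3] :: nat list)"
  unfolding contains_code order_iso_code by (simp add: upt_rec)

lemma pat11: "\<not> [1,5,4,3,2] \<prec> ([3,2,1,4] :: nat list)"
  unfolding contains_code order_iso_code by (simp add: upt_rec)

lemma pat12: "\<not> [1,5,4,3,2] \<prec> ([2,1,4,3] :: nat list)"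
  unfolding contains_code order_iso_code by (simp add: upt_rec)

lemma pats: "x \<in> {[1,2,3], [3,2,1,4], [2,1,4,3], [1,5,4,3,2]} \<Longrightarrow> y \<in> {[1,2,3], [3,2,1,4], [2,1,4,3], [1,5,4,3,2]}
  \<Longrightarrow> x \<noteq> y \<Longrightarrow> \<not> x \<prec> y"
  using pat1 pat2 pat3 pat4 pat5 pat6 pat7 pat8 pat9 pat10 pat11 pat12 by auto

lemma mu_neq: "1 \<le> k \<Longrightarrow> 1 \<le> l \<Longrightarrow> k \<noteq> l \<Longrightarrow> \<not> mu k \<prec> mu l"
proof
  assume a: "1 \<le> k" "1 \<le> l" "k \<noteq> l" "mu k \<prec> mu l"
  show False
  proof (cases "k < l")
    case True then show False using mu_not a by blast
  next
    case False
    then show False using contains_len[OF a(4)] mu_len[OF a(1)] mu_len[OF a(2)] a(3) by simp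
  qed
qed

theorem mainTheorem9:
  shows "antichain {mu k | k. k \<ge> 1} \<and>
         antichain ({[1,2,3], [3,2,1,4], [2,1,4,3], [1,5,4,3,2]} \<union> {mu k | k. k \<ge> 1})"
proof -
  let ?A = "{[1,2,3], [3,2,1,4], [2,1,4,3], [1,5,4,3,2]} :: nat list set"
  have UU: "\<not> x \<prec> y" if xU: "x \<in> {mu k | k. k \<ge> 1}" and yU: "y \<in> {mu k | k. k \<ge> 1}" and ne: "x \<noteq> y" for x y
  proof -
    obtain k where k: "x = mu k" "1 \<le> k" using xU by blast
    obtain l where l: "y = mu l" "1 \<le> l" using yU by blast
    have "k \<noteq> l" using k l ne by auto
    then show ?thesis using mu_neq[OF k(2) l(2)] k(1) l(1) by simp
  qed
  have AU: "\<not> x \<prec> y" if xA: "x \<in> ?A" and yU: "y \<in> {mu k | k. k \<ge> 1}" for x y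
  proof -
    obtain l where l: "y = mu l" "1 \<le> l" using yU by blast
    show ?thesis using xA av123[OF l(2)] av3214[OF l(2)] av2143[OF l(2)] av15432[OF l(2)] l(1) by auto
  qed
  have UA: "\<not> x \<prec> y" if xU: "x \<in> {mu k | k. k \<ge> 1}" and yA: "y \<in> ?A" for x y
  proof
    assume c: "x \<prec> y"
    obtain k where k: "x = mu k" "1 \<le> k" using xU by blast
    have "length y \<le> 5" using yA by auto
    then show False using contains_len[OF c] mu_len[OF k(2)] k by simp
  qed
  have P2: "\<not> x \<prec> y" if "x \<in> ?A" "y \<in> ?A" "x \<noteq> y" for x y
    using pats[OF that] .
  have C1: "antichain {mu k | k. k \<ge> 1}" unfolding antichain_def using UU by blast
  have C2: "antichain (?A \<union> {mu k | k. k \<ge> 1})" unfolding antichain_def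
  proof (intro ballI impI)
    fix x y assume x: "x \<in> ?A \<union> {mu k | k. k \<ge> 1}" and y: "y \<in> ?A \<union> {mu k | k. k \<ge> 1}" and ne: "x \<noteq> y"
    from x show "\<not> x \<prec> y"
    proof (rule UnE)
      assume xa: "x \<in> ?A"
      from y show ?thesis
      proof (rule UnE)
        assume "y \<in> ?A" then show ?thesis using P2 xa ne by blast
      next
        assume "y \<in> {mu k | k. k \<ge> 1}" then show ?thesis using AU xa by blast
      qed
    next
      assume xu: "x \<in> {mu k | k. k \<ge> 1}"
      from y show ?thesis
      proof (rule UnE)
        assume "y \<in> ?A" then show ?thesis using UA xu by blast
      next
        assume "y \<in> {mu k | k. k \<ge> 1}" then show ?thesis using UU xu ne by blast
      qed
    qed
  qed
  show ?thesis using C1 C2 by blast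
qed

end
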